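(* Let $A$ and $B$ be $k$-algebras and $\tau\colon B\otimes A\to A\otimes B$ a twisting map. Equip $A$, $B$ and $A\otimes_\tau B$ with their cofinite topologies. Then the linear isomorphism $A\otimes^! B\to A\otimes_\tau B$ given by the identity on the underlying vector space $A\otimes B$ is continuous.
   Context: $k$ is a field (discrete topology). All algebras are unital associative. For an algebra $R$, $\mathcal F(R)$ is the set of two-sided ideals of finite codimension, and the cofinite topology on $R$ is the linear topology whose open subspaces are those containing some element of $\mathcal F(R)$. For linearly topologized spaces $E,F$, $E\otimes^!F$ is $E\otimes F$ with the linear topology whose open subspaces are those containing $E_0\otimes F+E\otimes F_0$ for some open subspaces $E_0\subseteq E$, $F_0\subseteq F$. A linear map $\tau\colon B\otimes A\to A\otimes B$ is a twisting map if the multiplication $m_\tau=(m_A\otimes m_B)\circ(\mathrm{id}_A\otimes\tau\otimes\mathrm{id}_B)$ on $A\otimes B$ is associative with identity $1_A\otimes 1_B$; the resulting algebra is the twisted tensor product $A\otimes_\tau B$, and $a\mapsto a\otimes 1$, $b\mapsto 1\otimes b$ are algebra homomorphisms into it. *)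

theory Defs
  imports Main "HOL.Vector_Spaces"
begin

definition k_algebra :: "('k::field \<Rightarrow> 'a::{ring,monoid_mult} \<Rightarrow> 'a) \<Rightarrow> bool" where
  "k_algebra sc \<longleftrightarrow> Vector_Spaces.vector_space sc \<and>
     (\<forall>c x y. sc c (x * y) = sc c x * y \<and> sc c (x * y) = x * sc c y)"

definition bilin ::
  "('k::field \<Rightarrow> 'a::ab_group_add \<Rightarrow> 'a) \<Rightarrow> ('k \<Rightarrow> 'b::ab_group_add \<Rightarrow> 'b) \<Rightarrow>
   ('k \<Rightarrow> 'c::ab_group_add \<Rightarrow> 'c) \<Rightarrow> ('a \<Rightarrow> 'b \<Rightarrow> 'c) \<Rightarrow> bool" where
  "bilin s1 s2 s3 f \<longleftrightarrow> (\<forall>x. Vector_Spaces.linear s2 s3 (f x)) \<and>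
                          (\<forall>y. Vector_Spaces.linear s1 s3 (\<lambda>x. f x y))"

(* Together these characterize A \<otimes> B up to
   unique isomorphism. *)
definition is_tensor_product ::
  "('k::field \<Rightarrow> 'a::ab_group_add \<Rightarrow> 'a) \<Rightarrow> ('k \<Rightarrow> 'b::ab_group_add \<Rightarrow> 'b) \<Rightarrow>
   ('k \<Rightarrow> 't::ab_group_add \<Rightarrow> 't) \<Rightarrow> ('a \<Rightarrow> 'b \<Rightarrow> 't) \<Rightarrow> bool" where
  "is_tensor_product sa sb st tp \<longleftrightarrow>
     Vector_Spaces.vector_space sa \<and> Vector_Spaces.vector_space sb \<and> Vector_Spaces.vector_space st \<and>
     bilin sa sb st tp \<and>
     module.span st {tp x y | x y. True} = UNIV \<and>
     (\<forall>f :: 'a \<Rightarrow> 'b \<Rightarrow> 'k. bilin sa sb (*) f \<longrightarrow>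
        (\<exists>g. Vector_Spaces.linear st (*) g \<and> (\<forall>x y. g (tp x y) = f x y)))"

definition tensor_map ::
  "('k::field \<Rightarrow> 't::ab_group_add \<Rightarrow> 't) \<Rightarrow> ('a \<Rightarrow> 'b \<Rightarrow> 't) \<Rightarrow>
   ('a \<Rightarrow> 'a) \<Rightarrow> ('b \<Rightarrow> 'b) \<Rightarrow> 't \<Rightarrow> 't" where
  "tensor_map st tp f g = (THE h. Vector_Spaces.linear st st h \<and>
                                  (\<forall>x y. h (tp x y) = tp (f x) (g y)))"

(* m is the multiplication m_tau = (m_A \<otimes> m_B) o (id \<otimes> tau \<otimes> id) on A \<otimes> B:
   bilinear, and m(a\<otimes>b, a'\<otimes>b') = (a\<cdot>_ \<otimes> _\<cdot>b')(tau(b\<otimes>a')) *)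
definition twisted_mult ::
  "('k::field \<Rightarrow> 'a::{ring,monoid_mult} \<Rightarrow> 'a) \<Rightarrow> ('k \<Rightarrow> 'b::{ring,monoid_mult} \<Rightarrow> 'b) \<Rightarrow>
   ('k \<Rightarrow> 't::ab_group_add \<Rightarrow> 't) \<Rightarrow> ('a \<Rightarrow> 'b \<Rightarrow> 't) \<Rightarrow>
   ('b \<Rightarrow> 'a \<Rightarrow> 's) \<Rightarrow> ('s \<Rightarrow> 't) \<Rightarrow> ('t \<Rightarrow> 't \<Rightarrow> 't) \<Rightarrow> bool" where
  "twisted_mult sa sb st tp tpBA \<tau> m \<longleftrightarrow>
     bilin st st st m \<and>
     (\<forall>a b a' b'. m (tp a b) (tp a' b') =
         tensor_map st tp (\<lambda>x. a * x) (\<lambda>y. y * b') (\<tau> (tpBA b a')))"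

definition twisting_map ::
  "('k::field \<Rightarrow> 'a::{ring,monoid_mult} \<Rightarrow> 'a) \<Rightarrow> ('k \<Rightarrow> 'b::{ring,monoid_mult} \<Rightarrow> 'b) \<Rightarrow>
   ('k \<Rightarrow> 't::ab_group_add \<Rightarrow> 't) \<Rightarrow> ('a \<Rightarrow> 'b \<Rightarrow> 't) \<Rightarrow>
   ('k \<Rightarrow> 's::ab_group_add \<Rightarrow> 's) \<Rightarrow> ('b \<Rightarrow> 'a \<Rightarrow> 's) \<Rightarrow> ('s \<Rightarrow> 't) \<Rightarrow> bool" where
  "twisting_map sa sb st tp ss tpBA \<tau> \<longleftrightarrow>
     Vector_Spaces.linear ss st \<tau> \<and>
     (\<forall>m. twisted_mult sa sb st tp tpBA \<tau> m \<longrightarrow>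
        (\<forall>x y z. m (m x y) z = m x (m y z)) \<and>
        (\<forall>x. m (tp 1 1) x = x \<and> m x (tp 1 1) = x))"

definition alg_ideal :: "('k::field \<Rightarrow> 'v::ab_group_add \<Rightarrow> 'v) \<Rightarrow> ('v \<Rightarrow> 'v \<Rightarrow> 'v) \<Rightarrow> 'v set \<Rightarrow> bool" where
  "alg_ideal sc mult I \<longleftrightarrow> module.subspace sc I \<and>
     (\<forall>x i. i \<in> I \<longrightarrow> mult x i \<in> I \<and> mult i x \<in> I)"

definition cofinite_ideal :: "('k::field \<Rightarrow> 'v::ab_group_add \<Rightarrow> 'v) \<Rightarrow> ('v \<Rightarrow> 'v \<Rightarrow> 'v) \<Rightarrow> 'v set \<Rightarrow> bool" where
  "cofinite_ideal sc mult I \<longleftrightarrow> alg_ideal sc mult I \<and>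
     (\<exists>S. finite S \<and> module.span sc (S \<union> I) = UNIV)"

definition cofinite_open_subspace :: "('k::field \<Rightarrow> 'v::ab_group_add \<Rightarrow> 'v) \<Rightarrow> ('v \<Rightarrow> 'v \<Rightarrow> 'v) \<Rightarrow> 'v set \<Rightarrow> bool" where
  "cofinite_open_subspace sc mult U \<longleftrightarrow> module.subspace sc U \<and> (\<exists>I. cofinite_ideal sc mult I \<and> I \<subseteq> U)"

definition lin_open :: "('v::ab_group_add set \<Rightarrow> bool) \<Rightarrow> 'v set \<Rightarrow> bool" where
  "lin_open P U \<longleftrightarrow> (\<forall>x\<in>U. \<exists>V. P V \<and> (\<lambda>v. x + v) ` V \<subseteq> U)"

(* basic open subspaces E0 \<otimes> B + A \<otimes> F0 of A \<otimes>^! B *)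
definition bang_basic :: "('k::field \<Rightarrow> 'a::{ring,monoid_mult} \<Rightarrow> 'a) \<Rightarrow> ('k \<Rightarrow> 'b::{ring,monoid_mult} \<Rightarrow> 'b) \<Rightarrow>
   ('k \<Rightarrow> 't::ab_group_add \<Rightarrow> 't) \<Rightarrow> ('a \<Rightarrow> 'b \<Rightarrow> 't) \<Rightarrow> 't set \<Rightarrow> bool" where
  "bang_basic sa sb st tp W \<longleftrightarrow>
     (\<exists>E0 F0. cofinite_open_subspace sa (*) E0 \<and> cofinite_open_subspace sb (*) F0 \<and>
        W = module.span st ({tp x y | x y. x \<in> E0} \<union> {tp x y | x y. y \<in> F0}))"

end

theory Submission
  imports Defs
begin

lemma vs_self: "vector_space ((*) :: 'k::field \<Rightarrow> 'k \<Rightarrow> 'k)"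
  by (unfold_locales) (auto simp: algebra_simps)

lemma dual_sep:
  fixes st :: "'k::field \<Rightarrow> 't::ab_group_add \<Rightarrow> 't"
  assumes "vector_space st" "t \<noteq> 0"
  shows "\<exists>\<phi>. Vector_Spaces.linear st (*) \<phi> \<and> \<phi> t \<noteq> 0"
proof -
  interpret P: vector_space_pair st "(*) :: 'k \<Rightarrow> 'k \<Rightarrow> 'k"
    using assms(1) vs_self by (simp add: vector_space_pair_def)
  have "P.vs1.independent {t}" using assms(2) by simp
  from P.linear_independent_extend[OF this, of "\<lambda>_. 1"] show ?thesis by force
qed

lemma fincodim:
  fixes s1 :: "'k::field \<Rightarrow> 'v::ab_group_add \<Rightarrow> 'v" and s2 :: "'k \<Rightarrow> 'w::ab_group_add \<Rightarrow> 'w"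
  assumes lin: "Vector_Spaces.linear s1 s2 f" and fin: "finite S"
  shows "\<forall>I. module.subspace s2 I \<longrightarrow> range f \<subseteq> module.span s2 (S \<union> I) \<longrightarrow>
     (\<exists>S'. finite S' \<and> module.span s1 (S' \<union> f -` I) = UNIV)"
  using fin
proof (induction S rule: finite_induct)
  interpret L: linear s1 s2 f by fact
  case empty
  show ?case
  proof (intro allI impI)
    fix I assume "L.vs2.subspace I" "range f \<subseteq> L.vs2.span ({} \<union> I)"
    moreover have "L.vs2.span I = I" using \<open>L.vs2.subspace I\<close> L.vs2.span_eq_iff by blast
    ultimately have "f -` I = UNIV" by auto
    then show "\<exists>S'. finite S' \<and> L.vs1.span (S' \<union> f -` I) = UNIV" by auto
  qed
next
  interpret L: linear s1 s2 f by fact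
  case (insert s S)
  show ?case
  proof (intro allI impI)
    fix I assume sI: "L.vs2.subspace I" and r: "range f \<subseteq> L.vs2.span (insert s S \<union> I)"
    define I' where "I' = L.vs2.span (insert s I)"
    have sI': "L.vs2.subspace I'" unfolding I'_def by simp
    have "insert s S \<union> I \<subseteq> L.vs2.span (S \<union> I')"
      unfolding I'_def using L.vs2.span_superset L.vs2.span_mono
      by (smt (verit, ccfv_threshold) Un_iff insert_iff insert_subset subset_eq)
    then have "L.vs2.span (insert s S \<union> I) \<subseteq> L.vs2.span (S \<union> I')"
      by (simp add: L.vs2.span_minimal)
    with r have "range f \<subseteq> L.vs2.span (S \<union> I')" by blast
    with insert.IH sI' obtain S'' where fS'': "finite S''" and spS'': "L.vs1.span (S'' \<union> f -` I') = UNIV"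
      by blast
    have II': "I \<subseteq> I'" unfolding I'_def using L.vs2.span_superset by blast
    show "\<exists>S'. finite S' \<and> L.vs1.span (S' \<union> f -` I) = UNIV"
    proof (cases "\<exists>v0. f v0 \<in> I' \<and> f v0 \<notin> I")
      case False
      then have "f -` I' = f -` I" using II' by auto
      then show ?thesis using fS'' spS'' by auto
    next
      case True
      then obtain v0 where v0: "f v0 \<in> I'" "f v0 \<notin> I" by blast
      have spI: "L.vs2.span I = I" using sI by simp
      from v0(1) obtain c0 where c0: "f v0 - s2 c0 s \<in> I"
        unfolding I'_def L.vs2.span_insert spI by blast
      have c0nz: "c0 \<noteq> 0" using c0 v0(2) by auto
      have sub: "f -` I' \<subseteq> L.vs1.span (insert v0 (f -` I))"
      proof
        fix v assume "v \<in> f -` I'"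
        then obtain c where c: "f v - s2 c s \<in> I"
          unfolding I'_def L.vs2.span_insert spI by blast
        have "f v - s2 c s - s2 (c / c0) (f v0 - s2 c0 s) \<in> I"
          using c c0 sI L.vs2.subspace_diff L.vs2.subspace_scale by blast
        moreover have "f v - s2 c s - s2 (c / c0) (f v0 - s2 c0 s) = f (v - s1 (c/c0) v0)"
          using c0nz by (simp add: L.diff L.scale L.vs2.scale_right_diff_distrib)
        ultimately have "v - s1 (c/c0) v0 \<in> L.vs1.span (f -` I)"
          using L.vs1.span_base[of "v - s1 (c/c0) v0" "f -` I"] by simp
        then show "v \<in> L.vs1.span (insert v0 (f -` I))"
          unfolding L.vs1.span_insert by blast
      qed
      have "S'' \<union> f -` I' \<subseteq> L.vs1.span (insert v0 S'' \<union> f -` I)"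
      proof -
        have "L.vs1.span (insert v0 (f -` I)) \<subseteq> L.vs1.span (insert v0 S'' \<union> f -` I)"
          by (intro L.vs1.span_mono) auto
        then show ?thesis using sub L.vs1.span_superset by blast
      qed
      then have "L.vs1.span (S'' \<union> f -` I') \<subseteq> L.vs1.span (insert v0 S'' \<union> f -` I)"
        by (simp add: L.vs1.span_minimal)
      then show ?thesis using spS'' fS'' by (intro exI[of _ "insert v0 S''"]) auto
    qed
  qed
qed

lemma tp_univ:
  fixes sa :: "'k::field \<Rightarrow> 'a::ab_group_add \<Rightarrow> 'a" and sb :: "'k \<Rightarrow> 'b::ab_group_add \<Rightarrow> 'b"
    and st :: "'k \<Rightarrow> 't::ab_group_add \<Rightarrow> 't" and tp :: "'a \<Rightarrow> 'b \<Rightarrow> 't"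
  assumes T: "is_tensor_product sa sb st tp" and bl: "bilin sa sb st \<beta>"
  shows "\<exists>h. Vector_Spaces.linear st st h \<and> (\<forall>x y. h (tp x y) = \<beta> x y)"
proof -
  have vsT: "vector_space st" and spG: "module.span st {tp x y | x y. True} = UNIV"
    and UP: "\<And>f :: 'a \<Rightarrow> 'b \<Rightarrow> 'k. bilin sa sb (*) f \<Longrightarrow>
        (\<exists>g. Vector_Spaces.linear st (*) g \<and> (\<forall>x y. g (tp x y) = f x y))"
    using T unfolding is_tensor_product_def by auto
  interpret P: vector_space_pair st st using vsT by (simp add: vector_space_pair_def)
  interpret Q: vector_space_pair st "(*) :: 'k \<Rightarrow> 'k \<Rightarrow> 'k"
    using vsT vs_self by (simp add: vector_space_pair_def)
  define G where "G = {tp x y | x y. True}"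
  obtain B where BG: "B \<subseteq> G" and indB: "P.vs1.independent B" and GB: "G \<subseteq> P.vs1.span B"
    using P.vs1.maximal_independent_subset by blast
  have spB: "P.vs1.span B = UNIV"
  proof -
    have "P.vs1.span G \<subseteq> P.vs1.span B" using GB by (simp add: P.vs1.span_minimal)
    then show ?thesis using spG G_def by auto
  qed
  define pa where "pa b = (SOME p. b = tp (fst p) (snd p))" for b
  have pa: "b = tp (fst (pa b)) (snd (pa b))" if "b \<in> B" for b
  proof -
    from that BG obtain x y where "b = tp x y" unfolding G_def by blast
    then have "\<exists>p. b = tp (fst p) (snd p)" by (intro exI[of _ "(x,y)"]) simp
    then show ?thesis unfolding pa_def by (rule someI_ex)
  qed
  obtain h where lh: "Vector_Spaces.linear st st h" and hB: "\<forall>b\<in>B. h b = \<beta> (fst (pa b)) (snd (pa b))"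
    using P.linear_independent_extend[OF indB, of "\<lambda>b. \<beta> (fst (pa b)) (snd (pa b))"] by blast
  have "h (tp u v) = \<beta> u v" for u v
  proof (rule ccontr)
    assume ne: "h (tp u v) \<noteq> \<beta> u v"
    then obtain \<phi> where l\<phi>: "Vector_Spaces.linear st (*) \<phi>" and nz: "\<phi> (h (tp u v) - \<beta> u v) \<noteq> 0"
      using dual_sep[OF vsT, of "h (tp u v) - \<beta> u v"] by auto
    have "bilin sa sb (*) (\<lambda>x y. \<phi> (\<beta> x y))"
      unfolding bilin_def
    proof (intro conjI allI)
      fix x
      have "Vector_Spaces.linear sb st (\<beta> x)" using bl unfolding bilin_def by auto
      from Vector_Spaces.linear_compose[OF this l\<phi>]
      show "Vector_Spaces.linear sb (*) (\<lambda>y. \<phi> (\<beta> x y))" by (simp add: o_def)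
    next
      fix y
      have "Vector_Spaces.linear sa st (\<lambda>x. \<beta> x y)" using bl unfolding bilin_def by auto
      from Vector_Spaces.linear_compose[OF this l\<phi>]
      show "Vector_Spaces.linear sa (*) (\<lambda>x. \<phi> (\<beta> x y))" by (simp add: o_def)
    qed
    from UP[OF this] obtain \<psi> where l\<psi>: "Vector_Spaces.linear st (*) \<psi>"
      and \<psi>: "\<forall>x y. \<psi> (tp x y) = \<phi> (\<beta> x y)" by blast
    have l\<phi>h: "Vector_Spaces.linear st (*) (\<phi> \<circ> h)"
      by (rule Vector_Spaces.linear_compose[OF lh l\<phi>])
    have eq: "(\<phi> \<circ> h) t = \<psi> t" for t
    proof (rule Q.linear_eq_on[OF l\<phi>h l\<psi>])
      show "t \<in> P.vs1.span B" using spB by simp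
    next
      fix b assume "b \<in> B"
      then show "(\<phi> \<circ> h) b = \<psi> b" using hB \<psi> pa[of b] by (metis comp_apply)
    qed
    have "\<phi> (h (tp u v) - \<beta> u v) = \<phi> (h (tp u v)) - \<phi> (\<beta> u v)"
      using Q.linear_diff[OF l\<phi>] by blast
    also have "\<dots> = 0" using eq[of "tp u v"] \<psi> by simp
    finally show False using nz by simp
  qed
  then show ?thesis using lh by blast
qed

lemma tp_uniq:
  assumes T: "is_tensor_product sa sb st tp" and "Vector_Spaces.linear st st h1" "Vector_Spaces.linear st st h2"
    and "\<forall>x y. h1 (tp x y) = h2 (tp x y)"
  shows "h1 = h2"
proof
  fix t
  have vsT: "vector_space st" and spG: "module.span st {tp x y | x y. True} = UNIV"
    using T unfolding is_tensor_product_def by auto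
  interpret P: vector_space_pair st st using vsT by (simp add: vector_space_pair_def)
  show "h1 t = h2 t"
    by (rule P.linear_eq_on[OF assms(2,3), of t "{tp x y | x y. True}"]) (use spG assms(4) in auto)
qed

lemma tm_eval:
  assumes T: "is_tensor_product sa sb st tp" and lf: "Vector_Spaces.linear sa sa f"
    and lg: "Vector_Spaces.linear sb sb g"
  shows "tensor_map st tp f g (tp x y) = tp (f x) (g y)"
proof -
  have bl: "bilin sa sb st tp" using T unfolding is_tensor_product_def by auto
  have "bilin sa sb st (\<lambda>x y. tp (f x) (g y))"
    unfolding bilin_def
  proof (intro conjI allI)
    fix x
    have "Vector_Spaces.linear sb st (tp (f x))" using bl unfolding bilin_def by auto
    from Vector_Spaces.linear_compose[OF lg this]
    show "Vector_Spaces.linear sb st (\<lambda>y. tp (f x) (g y))" by (simp add: o_def)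
  next
    fix y
    have "Vector_Spaces.linear sa st (\<lambda>x. tp x (g y))" using bl unfolding bilin_def by auto
    from Vector_Spaces.linear_compose[OF lf this]
    show "Vector_Spaces.linear sa st (\<lambda>x. tp (f x) (g y))" by (simp add: o_def)
  qed
  from tp_univ[OF T this] obtain h where lh: "Vector_Spaces.linear st st h"
    and hh: "\<forall>x y. h (tp x y) = tp (f x) (g y)" by blast
  have "tensor_map st tp f g = h"
    unfolding tensor_map_def
  proof (rule the_equality)
    show "Vector_Spaces.linear st st h \<and> (\<forall>x y. h (tp x y) = tp (f x) (g y))" using lh hh by blast
  next
    fix h' assume "Vector_Spaces.linear st st h' \<and> (\<forall>x y. h' (tp x y) = tp (f x) (g y))"
    then show "h' = h" using tp_uniq[OF T _ lh] hh by auto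
  qed
  then show ?thesis using hh by simp
qed

lemma lin_lmul:
  assumes "k_algebra sa" shows "Vector_Spaces.linear sa sa (\<lambda>x. a * x)"
  using assms unfolding k_algebra_def linear_iff by (simp add: distrib_left) metis

lemma lin_rmul:
  assumes "k_algebra sa" shows "Vector_Spaces.linear sa sa (\<lambda>x. x * a)"
  using assms unfolding k_algebra_def linear_iff by (simp add: distrib_right)


lemma key:
  fixes sa :: "'k::field \<Rightarrow> 'a::{ring,monoid_mult} \<Rightarrow> 'a"
    and sb :: "'k \<Rightarrow> 'b::{ring,monoid_mult} \<Rightarrow> 'b"
    and st :: "'k \<Rightarrow> 't::ab_group_add \<Rightarrow> 't"
    and ss :: "'k \<Rightarrow> 's::ab_group_add \<Rightarrow> 's"
    and tp :: "'a \<Rightarrow> 'b \<Rightarrow> 't"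
    and tpBA :: "'b \<Rightarrow> 'a \<Rightarrow> 's"
    and \<tau> :: "'s \<Rightarrow> 't"
    and m :: "'t \<Rightarrow> 't \<Rightarrow> 't"
  assumes ka: "k_algebra sa" and kb: "k_algebra sb"
    and T: "is_tensor_product sa sb st tp"
    and tw: "twisting_map sa sb st tp ss tpBA \<tau>"
    and tm: "twisted_mult sa sb st tp tpBA \<tau> m"
    and I: "cofinite_ideal st m I"
  shows "\<exists>W. bang_basic sa sb st tp W \<and> W \<subseteq> I"
proof -
  have vsT: "vector_space st" and bl: "bilin sa sb st tp"
    using T unfolding is_tensor_product_def by auto
  have unitL: "m (tp 1 1) x = x" and unitR: "m x (tp 1 1) = x" for x
    using tw tm unfolding twisting_map_def by auto
  have mform: "m (tp a b) (tp a' b') = tensor_map st tp (\<lambda>x. a * x) (\<lambda>y. y * b') (\<tau> (tpBA b a'))"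
    for a b a' b' using tm unfolding twisted_mult_def by auto
  have tmid: "tensor_map st tp (\<lambda>x. 1 * x) (\<lambda>y. y * 1) = id"
  proof -
    have lid: "Vector_Spaces.linear st st id" using vsT unfolding linear_iff by simp
    show ?thesis unfolding tensor_map_def
    proof (rule the_equality)
      show "Vector_Spaces.linear st st id \<and> (\<forall>x y. id (tp x y) = tp (1 * x) (y * 1))" using lid by simp
    next
      fix h assume "Vector_Spaces.linear st st h \<and> (\<forall>x y. h (tp x y) = tp (1 * x) (y * 1))"
      then show "h = id" using tp_uniq[OF T _ lid] by auto
    qed
  qed
  have U1: "\<tau> (tpBA 1 a) = tp a 1" for a
    using unitL[of "tp a 1"] mform[of 1 1 a 1] tmid by simp
  have U2: "\<tau> (tpBA b 1) = tp 1 b" for b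
    using unitR[of "tp 1 b"] mform[of 1 b 1 1] tmid by simp
  have MA: "m (tp a 1) (tp a' b') = tp (a * a') b'" for a a' b'
    using mform[of a 1 a' b'] U1 tm_eval[OF T lin_lmul[OF ka] lin_rmul[OF kb]] by simp
  have MB: "m (tp a b) (tp 1 b') = tp a (b * b')" for a b b'
    using mform[of a b 1 b'] U2 tm_eval[OF T lin_lmul[OF ka] lin_rmul[OF kb]] by simp
  have sI: "module.subspace st I" and idl: "\<And>x i. i \<in> I \<Longrightarrow> m x i \<in> I \<and> m i x \<in> I"
    using I unfolding cofinite_ideal_def alg_ideal_def by auto
  obtain S where fS: "finite S" and spS: "module.span st (S \<union> I) = UNIV"
    using I unfolding cofinite_ideal_def by auto
  have lA: "Vector_Spaces.linear sa st (\<lambda>a. tp a 1)" and lB: "Vector_Spaces.linear sb st (tp 1)"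
    using bl unfolding bilin_def by auto
  define IA where "IA = (\<lambda>a. tp a 1) -` I"
  define IB where "IB = tp 1 -` I"
  have subA: "module.subspace sa IA" unfolding IA_def
    using module_hom.subspace_vimage[OF lA[unfolded linear_iff_module_hom] sI] .
  have subB: "module.subspace sb IB" unfolding IB_def
    using module_hom.subspace_vimage[OF lB[unfolded linear_iff_module_hom] sI] .
  have cA: "cofinite_ideal sa (*) IA"
    unfolding cofinite_ideal_def alg_ideal_def
  proof (intro conjI allI impI)
    show "module.subspace sa IA" by (rule subA)
  next
    fix x i assume "i \<in> IA"
    then have "tp i 1 \<in> I" unfolding IA_def by simp
    then show "x * i \<in> IA" "i * x \<in> IA"
      unfolding IA_def using idl[of "tp i 1" "tp x 1"] MA[of x i 1] MA[of i x 1] by auto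
  next
    show "\<exists>S. finite S \<and> module.span sa (S \<union> IA) = UNIV"
      using fincodim[OF lA fS] sI spS unfolding IA_def by auto
  qed
  have cB: "cofinite_ideal sb (*) IB"
    unfolding cofinite_ideal_def alg_ideal_def
  proof (intro conjI allI impI)
    show "module.subspace sb IB" by (rule subB)
  next
    fix x i assume "i \<in> IB"
    then have "tp 1 i \<in> I" unfolding IB_def by simp
    then show "x * i \<in> IB" "i * x \<in> IB"
      unfolding IB_def using idl[of "tp 1 i" "tp 1 x"] MB[of 1 x i] MB[of 1 i x] by auto
  next
    show "\<exists>S. finite S \<and> module.span sb (S \<union> IB) = UNIV"
      using fincodim[OF lB fS] sI spS unfolding IB_def by auto
  qed
  have oA: "cofinite_open_subspace sa (*) IA" unfolding cofinite_open_subspace_def using subA cA by blast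
  have oB: "cofinite_open_subspace sb (*) IB" unfolding cofinite_open_subspace_def using subB cB by blast
  define W where "W = module.span st ({tp x y | x y. x \<in> IA} \<union> {tp x y | x y. y \<in> IB})"
  have "bang_basic sa sb st tp W" unfolding bang_basic_def W_def using oA oB by blast
  moreover have "W \<subseteq> I"
  proof -
    interpret V: vector_space st by (rule vsT)
    have "{tp x y | x y. x \<in> IA} \<union> {tp x y | x y. y \<in> IB} \<subseteq> I"
    proof safe
      fix x y assume "x \<in> IA"
      then have "tp x 1 \<in> I" unfolding IA_def by simp
      then show "tp x y \<in> I" using idl[of "tp x 1" "tp 1 y"] MA[of x 1 y] by auto
    next
      fix x y assume "y \<in> IB"
      then have "tp 1 y \<in> I" unfolding IB_def by simp
      then show "tp x y \<in> I" using idl[of "tp 1 y" "tp x 1"] MA[of x 1 y] by auto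
    qed
    then show ?thesis unfolding W_def using V.span_minimal sI by blast
  qed
  ultimately show ?thesis by blast
qed

theorem lemma3p3:
  fixes sa :: "'k::field \<Rightarrow> 'a::{ring,monoid_mult} \<Rightarrow> 'a"
    and sb :: "'k \<Rightarrow> 'b::{ring,monoid_mult} \<Rightarrow> 'b"
    and st :: "'k \<Rightarrow> 't::ab_group_add \<Rightarrow> 't"
    and ss :: "'k \<Rightarrow> 's::ab_group_add \<Rightarrow> 's"
    and tp :: "'a \<Rightarrow> 'b \<Rightarrow> 't"
    and tpBA :: "'b \<Rightarrow> 'a \<Rightarrow> 's"
    and \<tau> :: "'s \<Rightarrow> 't"
    and m :: "'t \<Rightarrow> 't \<Rightarrow> 't"
  assumes "k_algebra sa" and "k_algebra sb"
    and "is_tensor_product sa sb st tp"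
    and "is_tensor_product sb sa ss tpBA"
    and "twisting_map sa sb st tp ss tpBA \<tau>"
    and "twisted_mult sa sb st tp tpBA \<tau> m"
  shows "\<forall>U. lin_open (cofinite_ideal st m) U \<longrightarrow> lin_open (bang_basic sa sb st tp) U"
proof (intro allI impI)
  fix U assume U: "lin_open (cofinite_ideal st m) U"
  show "lin_open (bang_basic sa sb st tp) U"
    unfolding lin_open_def
  proof
    fix x assume "x \<in> U"
    with U obtain V where V: "cofinite_ideal st m V" and xV: "(\<lambda>v. x + v) ` V \<subseteq> U"
      unfolding lin_open_def by blast
    from key[OF assms(1,2,3,5,6) V] obtain W where "bang_basic sa sb st tp W" "W \<subseteq> V" by blast
    then show "\<exists>V. bang_basic sa sb st tp V \<and> (\<lambda>v. x + v) ` V \<subseteq> U" using xV by blast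
  qed
qed

end
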